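(* Let $G$ be a signed digraph on vertex set $\{1,\dots,n\}$ and let $H$ be a spanning subgraph of $G$ such that (i) $G$ has no arc from a sink of $H$ to a source of $H$, and (ii) $G$ has no arc (from any vertex) to a vertex that is isolated in $H$. Let $A$ be the set of sources of $H$ that are not sources of $G$, and $B$ the set of sinks of $H$ that are not sinks of $G$. Let $h:Y\to Y$ be a degree-bounded finite dynamical system on $H$ and let $\xi\in Y$. Then there exists a degree-bounded finite dynamical system $f:X\to X$ on $G$, with $Y\subseteq X$, such that: (1) $f(X)\subseteq Y$; (2) $f_i(X)\subseteq h_i(Y)$ for all $i\notin A$; (3) $f(x)=h(x)$ for all $x\in Y$ with $x_i=\xi_i$ for all $i\in B$; (4) $f_i(x)=h_i(x)$ for all $x\in Y$ and all vertices $i$ with $G_i\cap B=\emptyset$.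
   Context: A finite dynamical system (FDS) with $n$ components is a map $f=(f_1,\dots,f_n):X\to X$ where $X=X_1\times\cdots\times X_n$ and each $X_i$ is a nonempty finite interval of integers. A signed digraph is a pair $G=(V,E)$ with $E\subseteq V\times V\times\{+,-\}$; $(j,i,s)\in E$ is an arc from $j$ to $i$ of sign $s$ (loops allowed; $G$ may have both a positive and a negative arc from $j$ to $i$). $G_i$ denotes the set of $j$ having an arc to $i$ in $G$. In-degree $d^{\mathrm{in}}_G(i)$ and out-degree $d^{\mathrm{out}}_G(i)$ count arcs entering/leaving $i$, positive and negative arcs counted separately. A source has in-degree $0$, a sink out-degree $0$, an isolated vertex both. A spanning subgraph has the same vertex set and a subset of the arcs. The interaction graph of an FDS $f$ is the signed digraph on $\{1,\dots,n\}$ with a positive (resp. negative) arc from $j$ to $i$ iff there is $x\in X$ with $x_j<\max(X_j)$ and $f_i(x+e_j)-f_i(x)$ positive (resp. negative), $e_j$ the $j$-th unit vector; $f$ is an FDS on $G$ if $G$ is its interaction graph. $f$ is degree-bounded if, with $G$ its interaction graph, for every $i$: $|X_i|=2$ if $d^{\mathrm{out}}_G(i)=0<d^{\mathrm{in}}_G(i)$, and $|X_i|\le d^{\mathrm{out}}_G(i)+1$ otherwise. *)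

theory Defs
  imports Main
begin

datatype sign = Pos | Neg

type_synonym sdigraph = "(nat \<times> nat \<times> sign) set"

text \<open>States are functions nat => int; components 1..n are meaningful,
  all other components are fixed to 0.\<close>

definition box :: "nat \<Rightarrow> (nat \<Rightarrow> int) \<Rightarrow> (nat \<Rightarrow> int) \<Rightarrow> (nat \<Rightarrow> int) set" where
  "box n a b = {x. \<forall>i. (i \<in> {1..n} \<longrightarrow> a i \<le> x i \<and> x i \<le> b i) \<and> (i \<notin> {1..n} \<longrightarrow> x i = 0)}"

definition state_space :: "nat \<Rightarrow> (nat \<Rightarrow> int) set \<Rightarrow> bool" where
  "state_space n X \<longleftrightarrow> (\<exists>a b. (\<forall>i\<in>{1..n}. a i \<le> b i) \<and> X = box n a b)"

definition comp :: "(nat \<Rightarrow> int) set \<Rightarrow> nat \<Rightarrow> int set" where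
  "comp X i = (\<lambda>x. x i) ` X"

definition interaction_graph :: "nat \<Rightarrow> (nat \<Rightarrow> int) set \<Rightarrow> ((nat \<Rightarrow> int) \<Rightarrow> (nat \<Rightarrow> int)) \<Rightarrow> sdigraph" where
  "interaction_graph n X f = {(j, i, s). j \<in> {1..n} \<and> i \<in> {1..n} \<and>
     (\<exists>x\<in>X. x j < Max (comp X j) \<and>
        (if s = Pos then f (x(j := x j + 1)) i - f x i > 0
                    else f (x(j := x j + 1)) i - f x i < 0))}"

definition is_sdigraph :: "nat \<Rightarrow> sdigraph \<Rightarrow> bool" where
  "is_sdigraph n G \<longleftrightarrow> G \<subseteq> {1..n} \<times> {1..n} \<times> UNIV"

definition indeg :: "sdigraph \<Rightarrow> nat \<Rightarrow> nat" where
  "indeg G i = card {(j, s). (j, i, s) \<in> G}"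

definition outdeg :: "sdigraph \<Rightarrow> nat \<Rightarrow> nat" where
  "outdeg G i = card {(k, s). (i, k, s) \<in> G}"

definition in_nbrs :: "sdigraph \<Rightarrow> nat \<Rightarrow> nat set" where
  "in_nbrs G i = {j. \<exists>s. (j, i, s) \<in> G}"

definition is_source :: "sdigraph \<Rightarrow> nat \<Rightarrow> bool" where
  "is_source G i \<longleftrightarrow> indeg G i = 0"

definition is_sink :: "sdigraph \<Rightarrow> nat \<Rightarrow> bool" where
  "is_sink G i \<longleftrightarrow> outdeg G i = 0"

definition is_isolated :: "sdigraph \<Rightarrow> nat \<Rightarrow> bool" where
  "is_isolated G i \<longleftrightarrow> is_source G i \<and> is_sink G i"

definition fds_on :: "nat \<Rightarrow> (nat \<Rightarrow> int) set \<Rightarrow> ((nat \<Rightarrow> int) \<Rightarrow> (nat \<Rightarrow> int)) \<Rightarrow> sdigraph \<Rightarrow> bool" where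
  "fds_on n X f G \<longleftrightarrow> state_space n X \<and> (\<forall>x\<in>X. f x \<in> X) \<and> interaction_graph n X f = G"

definition degree_bounded :: "nat \<Rightarrow> (nat \<Rightarrow> int) set \<Rightarrow> ((nat \<Rightarrow> int) \<Rightarrow> (nat \<Rightarrow> int)) \<Rightarrow> bool" where
  "degree_bounded n X f \<longleftrightarrow> (\<forall>i\<in>{1..n}.
     (let G = interaction_graph n X f in
      if outdeg G i = 0 \<and> 0 < indeg G i then card (comp X i) = 2
      else card (comp X i) \<le> outdeg G i + 1))"

end

theory Submission
  imports Defs
begin


lemma sign_UNIV: "(UNIV :: sign set) = {Pos, Neg}"
  using sign.exhaust by auto

lemma finite_sign[simp]: "finite (UNIV :: sign set)"
  by (simp add: sign_UNIV)

lemma comp_box: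
  assumes "\<forall>i\<in>{1..n}. a i \<le> b i" "i \<in> {1..n}"
  shows "comp (box n a b) i = {a i..b i}"
proof
  show "comp (box n a b) i \<subseteq> {a i..b i}" using assms(2) by (auto simp: comp_def box_def)
  show "{a i..b i} \<subseteq> comp (box n a b) i"
  proof
    fix v assume v: "v \<in> {a i..b i}"
    let ?x = "\<lambda>l. if l \<in> {1..n} then (if l = i then v else a l) else 0"
    have "?x \<in> box n a b" using assms v by (auto simp: box_def)
    moreover have "?x i = v" using assms(2) by simp
    ultimately show "v \<in> comp (box n a b) i" unfolding comp_def by (intro image_eqI[where x="?x"]) simp_all
  qed
qed

lemma Max_comp_box:
  assumes "\<forall>i\<in>{1..n}. a i \<le> b i" "i \<in> {1..n}"
  shows "Max (comp (box n a b) i) = b i"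
  unfolding comp_box[OF assms] using assms by (intro Max_eqI) auto

lemma card_comp_box:
  assumes "\<forall>i\<in>{1..n}. a i \<le> b i" "i \<in> {1..n}"
  shows "card (comp (box n a b) i) = nat (b i - a i + 1)"
  unfolding comp_box[OF assms] by simp

lemma upd_box:
  assumes "x \<in> box n a b" "i \<in> {1..n}" "a i \<le> v" "v \<le> b i"
  shows "x(i := v) \<in> box n a b"
  using assms by (auto simp: box_def)

lemma box_range: "x \<in> box n a b \<Longrightarrow> i \<in> {1..n} \<Longrightarrow> a i \<le> x i \<and> x i \<le> b i"
  by (auto simp: box_def)

lemma box_out: "x \<in> box n a b \<Longrightarrow> i \<notin> {1..n} \<Longrightarrow> x i = 0"
  by (auto simp: box_def)

lemma outdeg_0_iff: "finite E \<Longrightarrow> outdeg E i = 0 \<longleftrightarrow> (\<forall>k s. (i,k,s) \<notin> E)"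
proof -
  assume E: "finite E"
  have "{(k, s). (i, k, s) \<in> E} \<subseteq> snd ` E" by force
  then have "finite {(k, s). (i, k, s) \<in> E}" using E finite_surj by blast
  then show ?thesis unfolding outdeg_def by auto
qed

lemma indeg_0_iff: "finite E \<Longrightarrow> indeg E i = 0 \<longleftrightarrow> (\<forall>j s. (j,i,s) \<notin> E)"
proof -
  assume E: "finite E"
  have "{(j, s). (j, i, s) \<in> E} \<subseteq> (\<lambda>(j,k,s). (j,s)) ` E" by force
  then have "finite {(j, s). (j, i, s) \<in> E}" using E finite_surj by blast
  then show ?thesis unfolding indeg_def by auto
qed

lemma finite_out: "finite E \<Longrightarrow> finite {(k, s). (i, k, s) \<in> E}"
proof -
  assume E: "finite E"
  have "{(k, s). (i, k, s) \<in> E} \<subseteq> snd ` E" by force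
  then show ?thesis using E finite_surj by blast
qed



locale L =
  fixes n :: nat and G H :: sdigraph and Y :: "(nat \<Rightarrow> int) set"
    and h :: "(nat \<Rightarrow> int) \<Rightarrow> (nat \<Rightarrow> int)"
    and \<xi> a b :: "nat \<Rightarrow> int"
  assumes Gsd: "is_sdigraph n G" and HG: "H \<subseteq> G"
    and c1: "\<forall>(j, i, s)\<in>G. \<not> (is_sink H j \<and> is_source H i)"
    and c2: "\<forall>(j, i, s)\<in>G. \<not> is_isolated H i"
    and hmap: "\<forall>x\<in>Y. h x \<in> Y" and hIG: "interaction_graph n Y h = H"
    and hdb: "degree_bounded n Y h" and xi: "\<xi> \<in> Y"
    and Ybox: "Y = box n a b" and ab: "\<forall>i\<in>{1..n}. a i \<le> b i"
begin

lemma finG: "finite G"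
proof -
  have "G \<subseteq> {1..n} \<times> {1..n} \<times> UNIV" using Gsd by (simp add: is_sdigraph_def)
  then show ?thesis by (rule finite_subset) auto
qed

lemma finH: "finite H" using finG HG finite_subset by blast

lemma G_range: "(j,k,s) \<in> G \<Longrightarrow> j \<in> {1..n} \<and> k \<in> {1..n}"
  using Gsd by (auto simp: is_sdigraph_def)

lemma H_range: "(j,k,s) \<in> H \<Longrightarrow> j \<in> {1..n} \<and> k \<in> {1..n}"
  using HG G_range by blast

lemma MaxY: "j \<in> {1..n} \<Longrightarrow> Max (comp Y j) = b j"
  using Max_comp_box[OF ab] Ybox by simp

lemma H_iff: "(j,k,s) \<in> H \<longleftrightarrow> j \<in> {1..n} \<and> k \<in> {1..n} \<and>
   (\<exists>x\<in>Y. x j < b j \<and> (if s = Pos then h (x(j := x j + 1)) k - h x k > 0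
                                 else h (x(j := x j + 1)) k - h x k < 0))"
proof -
  have "(j,k,s) \<in> H \<longleftrightarrow> (j,k,s) \<in> interaction_graph n Y h" using hIG by simp
  also have "\<dots> \<longleftrightarrow> j \<in> {1..n} \<and> k \<in> {1..n} \<and>
   (\<exists>x\<in>Y. x j < b j \<and> (if s = Pos then h (x(j := x j + 1)) k - h x k > 0
                                 else h (x(j := x j + 1)) k - h x k < 0))"
    unfolding interaction_graph_def using MaxY by auto
  finally show ?thesis .
qed

lemma hY: "x \<in> Y \<Longrightarrow> h x \<in> Y" using hmap by blast

lemma h_range: "x \<in> Y \<Longrightarrow> k \<in> {1..n} \<Longrightarrow> a k \<le> h x k \<and> h x k \<le> b k"
  using hY box_range Ybox by blast

lemma h_out: "x \<in> Y \<Longrightarrow> k \<notin> {1..n} \<Longrightarrow> h x k = 0"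
  using hY box_out Ybox by blast

lemma Y_range: "x \<in> Y \<Longrightarrow> k \<in> {1..n} \<Longrightarrow> a k \<le> x k \<and> x k \<le> b k"
  using box_range Ybox by blast

lemma Y_upd: "x \<in> Y \<Longrightarrow> i \<in> {1..n} \<Longrightarrow> a i \<le> v \<Longrightarrow> v \<le> b i \<Longrightarrow> x(i := v) \<in> Y"
  using upd_box Ybox by blast

lemma noPos_step:
  assumes "(j,k,Pos) \<notin> H" "j \<in> {1..n}" "k \<in> {1..n}" "p \<in> Y" "p j < b j"
  shows "h (p(j := p j + 1)) k \<le> h p k"
  using assms H_iff[of j k Pos] by force

lemma noNeg_step:
  assumes "(j,k,Neg) \<notin> H" "j \<in> {1..n}" "k \<in> {1..n}" "p \<in> Y" "p j < b j"
  shows "h p k \<le> h (p(j := p j + 1)) k"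
  using assms H_iff[of j k Neg] by force

lemma noPos_mono:
  assumes "(j,k,Pos) \<notin> H" "j \<in> {1..n}" "k \<in> {1..n}" "y \<in> Y" "a j \<le> u" "u \<le> w" "w \<le> b j"
  shows "h (y(j := w)) k \<le> h (y(j := u)) k"
proof -
  have "\<And>w. w = u + int d \<Longrightarrow> w \<le> b j \<Longrightarrow> h (y(j := w)) k \<le> h (y(j := u)) k" for d
  proof (induction d)
    case 0 then show ?case by simp
  next
    case (Suc d)
    define p where "p = y(j := u + int d)"
    have pY: "p \<in> Y" unfolding p_def using Suc.prems assms by (intro Y_upd) auto
    have "p j < b j" using Suc.prems unfolding p_def by simp
    then have "h (p(j := p j + 1)) k \<le> h p k" using noPos_step assms pY by blast
    moreover have "p(j := p j + 1) = y(j := w)" unfolding p_def using Suc.prems by (simp add: algebra_simps)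
    moreover have "h p k \<le> h (y(j := u)) k" unfolding p_def by (rule Suc.IH) (use Suc.prems in auto)
    ultimately show ?case by (metis order_trans)
  qed
  moreover have "w = u + int (nat (w - u))" using assms by simp
  ultimately show ?thesis using assms by blast
qed

lemma noNeg_mono:
  assumes "(j,k,Neg) \<notin> H" "j \<in> {1..n}" "k \<in> {1..n}" "y \<in> Y" "a j \<le> u" "u \<le> w" "w \<le> b j"
  shows "h (y(j := u)) k \<le> h (y(j := w)) k"
proof -
  have "\<And>w. w = u + int d \<Longrightarrow> w \<le> b j \<Longrightarrow> h (y(j := u)) k \<le> h (y(j := w)) k" for d
  proof (induction d)
    case 0 then show ?case by simp
  next
    case (Suc d)
    define p where "p = y(j := u + int d)"
    have pY: "p \<in> Y" unfolding p_def using Suc.prems assms by (intro Y_upd) auto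
    have "p j < b j" using Suc.prems unfolding p_def by simp
    then have "h p k \<le> h (p(j := p j + 1)) k" using noNeg_step assms pY by blast
    moreover have "p(j := p j + 1) = y(j := w)" unfolding p_def using Suc.prems by (simp add: algebra_simps)
    moreover have "h (y(j := u)) k \<le> h p k" unfolding p_def by (rule Suc.IH) (use Suc.prems in auto)
    ultimately show ?case by (metis order_trans)
  qed
  moreover have "w = u + int (nat (w - u))" using assms by simp
  ultimately show ?thesis using assms by blast
qed

lemma indep:
  assumes "(j,k,Pos) \<notin> H" "(j,k,Neg) \<notin> H" "j \<in> {1..n}" "k \<in> {1..n}" "y \<in> Y"
    "a j \<le> u" "u \<le> b j" "a j \<le> w" "w \<le> b j"
  shows "h (y(j := u)) k = h (y(j := w)) k"
proof (cases "u \<le> w")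
  case True
  then show ?thesis using noPos_mono[OF assms(1,3,4,5)] noNeg_mono[OF assms(2,3,4,5)] assms
    by (meson order_antisym)
next
  case False
  then show ?thesis using noPos_mono[OF assms(1,3,4,5)] noNeg_mono[OF assms(2,3,4,5)] assms
    by (meson order_antisym nle_le)
qed

lemma sink_noarc: "is_sink H j \<Longrightarrow> (j,k,s) \<notin> H"
  using outdeg_0_iff[OF finH] unfolding is_sink_def by blast

lemma sink_indep:
  assumes "is_sink H j" "j \<in> {1..n}" "y \<in> Y" "a j \<le> v" "v \<le> b j"
  shows "h (y(j := v)) = h y"
proof
  fix k
  have yv: "y(j := v) \<in> Y" using assms Y_upd by blast
  show "h (y(j := v)) k = h y k"
  proof (cases "k \<in> {1..n}")
    case True
    have "h (y(j := v)) k = h (y(j := y j)) k"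
      using indep[OF sink_noarc[OF assms(1)] sink_noarc[OF assms(1)] assms(2) True assms(3)]
        assms Y_range by blast
    then show ?thesis by simp
  next
    case False then show ?thesis using h_out yv assms(3) by simp
  qed
qed

end


context L
begin

definition "Aset = {i\<in>{1..n}. is_source H i \<and> \<not> is_source G i}"
definition "Bset = {i\<in>{1..n}. is_sink H i \<and> \<not> is_sink G i}"
definition "Ext = G - H"
definition "R k = (\<lambda>y. h y k) ` Y"
definition "Mx k = (if k \<in> Aset then b k else Max (R k))"
definition "Mn k = (if k \<in> Aset then a k else Min (R k))"
definition "lo j = (if j \<in> Bset then \<xi> j else a j)"
definition "hi j = (if j \<in> Bset then \<xi> j else b j)"
definition "side j k s = (if j \<in> Bset then
    (if s = Pos then \<not> a j < \<xi> j \<or> (\<exists>k'. (j,k',Neg) \<in> Ext)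
     else \<not> a j < \<xi> j \<and> \<not> (\<exists>k'. (j,k',Pos) \<in> Ext))
  else (if s = Pos then (\<exists>y\<in>Y. y j = b j \<and> h y k < Mx k)
        else \<not> (\<exists>y\<in>Y. y j = a j \<and> h y k < Mx k)))"
definition "Us j = {(k,s). (j,k,s) \<in> Ext \<and> side j k s}"
definition "Ds j = {(k,s). (j,k,s) \<in> Ext \<and> \<not> side j k s}"
definition "a' j = lo j - (if Ds j = {} then 0 else 1)"
definition "b' j = hi j + (if Us j = {} then 0 else 1)"
definition "XX = box n a' b'"
definition "active x j k s = ((j,k,s) \<in> Ext \<and> (if side j k s then hi j < x j else x j < lo j))"
definition "isM j k s = (side j k s = (s = Pos))"
definition "hasm x k = (\<exists>j s. active x j k s \<and> \<not> isM j k s)"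
definition "hasM x k = (\<exists>j s. active x j k s \<and> isM j k s)"
definition "clamp x = (\<lambda>i. if i \<in> {1..n} then max (a i) (min (b i) (x i)) else 0)"
definition "FF x k = (if hasm x k then Mn k else if hasM x k then Mx k else h (clamp x) k)"
definition "ff x = (\<lambda>k. if k \<in> {1..n} then FF x k else 0)"

lemma Ext_G: "(j,k,s) \<in> Ext \<Longrightarrow> (j,k,s) \<in> G" by (simp add: Ext_def)
lemma Ext_H: "(j,k,s) \<in> Ext \<Longrightarrow> (j,k,s) \<notin> H" by (simp add: Ext_def)
lemma Ext_range: "(j,k,s) \<in> Ext \<Longrightarrow> j \<in> {1..n} \<and> k \<in> {1..n}" using Ext_G G_range by blast

lemma Bset_sub: "Bset \<subseteq> {1..n}" by (auto simp: Bset_def)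
lemma Bset_sink: "j \<in> Bset \<Longrightarrow> is_sink H j" by (auto simp: Bset_def)

lemma xi_range: "j \<in> {1..n} \<Longrightarrow> a j \<le> \<xi> j \<and> \<xi> j \<le> b j" using xi Y_range by blast

lemma lo_le_hi: "j \<in> {1..n} \<Longrightarrow> lo j \<le> hi j"
  using ab by (auto simp: lo_def hi_def)

lemma core_inactive:
  assumes "x \<in> Y" "\<forall>i\<in>Bset. x i = \<xi> i"
  shows "\<not> active x j k s"
proof
  assume act: "active x j k s"
  then have j: "j \<in> {1..n}" using Ext_range by (auto simp: active_def)
  show False
  proof (cases "j \<in> Bset")
    case True then show ?thesis using act assms by (auto simp: active_def lo_def hi_def split: if_splits)
  next
    case False then show ?thesis using act assms Y_range[OF assms(1) j]
      by (auto simp: active_def lo_def hi_def split: if_splits)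
  qed
qed

lemma clamp_Y: "clamp x \<in> Y"
  unfolding Ybox clamp_def box_def using ab by auto

lemma clamp_id: "x \<in> Y \<Longrightarrow> clamp x = x"
proof
  fix i
  assume x: "x \<in> Y"
  show "clamp x i = x i"
  proof (cases "i \<in> {1..n}")
    case True then show ?thesis using Y_range[OF x True] by (simp add: clamp_def)
  next
    case False then show ?thesis using False box_out[of x n a b i] x Ybox by (auto simp: clamp_def)
  qed
qed

lemma core_ff:
  assumes "x \<in> Y" "\<forall>i\<in>Bset. x i = \<xi> i"
  shows "ff x = h x"
proof
  fix k
  have "\<not> hasm x k" "\<not> hasM x k" using core_inactive[OF assms] by (auto simp: hasm_def hasM_def)
  then show "ff x k = h x k"
    using clamp_id[OF assms(1)] h_out[OF assms(1)] by (auto simp: ff_def FF_def)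
qed

lemma rep_aux:
  assumes "finite C" "C \<subseteq> Bset" "y \<in> Y"
  shows "(\<lambda>i. if i \<in> C then \<xi> i else y i) \<in> Y \<and> h (\<lambda>i. if i \<in> C then \<xi> i else y i) = h y"
  using assms(1,2)
proof (induction C rule: finite_induct)
  case empty then show ?case using assms by simp
next
  case (insert c C)
  let ?q = "\<lambda>i. if i \<in> C then \<xi> i else y i"
  have eq: "(\<lambda>i. if i \<in> insert c C then \<xi> i else y i) = ?q(c := \<xi> c)" by auto
  have c: "c \<in> {1..n}" "is_sink H c" using insert.prems Bset_sub Bset_sink by auto
  have q: "?q \<in> Y" "h ?q = h y" using insert by auto
  show ?case unfolding eq using Y_upd[OF q(1) c(1)] xi_range[OF c(1)] sink_indep[OF c(2,1) q(1)] q(2)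
    by auto
qed

lemma rep:
  assumes "y \<in> Y"
  obtains z where "z \<in> Y" "h z = h y" "\<forall>i\<in>Bset. z i = \<xi> i" "\<forall>i. i \<notin> Bset \<longrightarrow> z i = y i"
proof -
  have "finite Bset" using Bset_sub finite_subset by blast
  from rep_aux[OF this _ assms] show ?thesis using that[of "\<lambda>i. if i \<in> Bset then \<xi> i else y i"] by auto
qed

lemma R_fin: "k \<in> {1..n} \<Longrightarrow> finite (R k)"
proof -
  assume k: "k \<in> {1..n}"
  have "R k \<subseteq> {a k..b k}" unfolding R_def using h_range[OF _ k] by auto
  then show ?thesis using finite_subset by blast
qed

lemma R_ne: "R k \<noteq> {}" unfolding R_def using xi by auto

lemma Mn_le_h: "y \<in> Y \<Longrightarrow> k \<in> {1..n} \<Longrightarrow> Mn k \<le> h y k \<and> h y k \<le> Mx k"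
proof -
  assume y: "y \<in> Y" and k: "k \<in> {1..n}"
  have "h y k \<in> R k" unfolding R_def using y by auto
  then show ?thesis using h_range[OF y k] R_fin[OF k] by (auto simp: Mn_def Mx_def)
qed

lemma Mn_le_Mx: "k \<in> {1..n} \<Longrightarrow> Mn k \<le> Mx k"
  using Mn_le_h xi by force

lemma MnMx_R: "k \<in> {1..n} \<Longrightarrow> k \<notin> Aset \<Longrightarrow> Mn k \<in> R k \<and> Mx k \<in> R k"
  using R_fin R_ne by (auto simp: Mn_def Mx_def)

lemma MnMx_range: "k \<in> {1..n} \<Longrightarrow> a k \<le> Mn k \<and> Mx k \<le> b k"
proof -
  assume k: "k \<in> {1..n}"
  show ?thesis
  proof (cases "k \<in> Aset")
    case True then show ?thesis by (simp add: Mn_def Mx_def)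
  next
    case False
    then have "Mn k \<in> R k" "Mx k \<in> R k" using MnMx_R k by auto
    then show ?thesis unfolding R_def using h_range[OF _ k] by auto
  qed
qed

lemma Mn_lt_Mx:
  assumes "(j,k,s) \<in> Ext"
  shows "Mn k < Mx k"
proof -
  have G: "(j,k,s) \<in> G" and k: "k \<in> {1..n}" using assms Ext_G Ext_range by auto
  show ?thesis
  proof (cases "k \<in> Aset")
    case True
    then have src: "is_source H k" by (simp add: Aset_def)
    have "\<not> is_isolated H k" using c2 G by blast
    then have "\<not> is_sink H k" using src by (simp add: is_isolated_def)
    then obtain k' s' where "(k,k',s') \<in> H" using outdeg_0_iff[OF finH] by (auto simp: is_sink_def)
    then obtain x where "x \<in> Y" "x k < b k" using H_iff by blast
    then have "a k < b k" using Y_range k by force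
    then show ?thesis using True by (simp add: Mn_def Mx_def)
  next
    case False
    have "\<not> is_source G k" using G indeg_0_iff[OF finG] by (auto simp: is_source_def)
    then have "\<not> is_source H k" using False k by (auto simp: Aset_def)
    then obtain l s' where ls: "(l,k,s') \<in> H" using indeg_0_iff[OF finH] by (auto simp: is_source_def)
    then have l: "l \<in> {1..n}" using H_range by blast
    from ls obtain x where x: "x \<in> Y" "x l < b l" "h (x(l := x l + 1)) k \<noteq> h x k"
      using H_iff[of l k s'] by (auto split: if_splits)
    have x': "x(l := x l + 1) \<in> Y" using Y_upd[OF x(1) l] Y_range[OF x(1) l] x(2) by auto
    have "h x k \<in> R k" "h (x(l := x l + 1)) k \<in> R k" unfolding R_def using x x' by auto
    then have "Min (R k) \<le> h x k" "Min (R k) \<le> h (x(l := x l + 1)) k"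
      "h x k \<le> Max (R k)" "h (x(l := x l + 1)) k \<le> Max (R k)" using R_fin[OF k] by auto
    then have "Min (R k) < Max (R k)" using x(3) by linarith
    then show ?thesis using False by (simp add: Mn_def Mx_def)
  qed
qed

lemma side_pair:
  assumes "(j,k,Pos) \<in> Ext" "(j,k,Neg) \<in> Ext"
  shows "side j k Pos \<noteq> side j k Neg"
proof (cases "j \<in> Bset")
  case True then show ?thesis using assms by (auto simp: side_def)
next
  case False
  have j: "j \<in> {1..n}" and k: "k \<in> {1..n}" using assms Ext_range by auto
  have ind: "\<And>y u w. y \<in> Y \<Longrightarrow> a j \<le> u \<Longrightarrow> u \<le> b j \<Longrightarrow> a j \<le> w \<Longrightarrow> w \<le> b j \<Longrightarrow>
     h (y(j := u)) k = h (y(j := w)) k"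
    using indep[OF Ext_H[OF assms(1)] Ext_H[OF assms(2)] j k] by blast
  have "(\<exists>y\<in>Y. y j = b j \<and> h y k < Mx k) \<longleftrightarrow> (\<exists>y\<in>Y. y j = a j \<and> h y k < Mx k)"
  proof
    assume "\<exists>y\<in>Y. y j = b j \<and> h y k < Mx k"
    then obtain y where y: "y \<in> Y" "y j = b j" "h y k < Mx k" by blast
    have "h (y(j := a j)) k = h (y(j := b j)) k" using ind[OF y(1)] ab j by auto
    moreover have "y(j := b j) = y" using y(2) by auto
    ultimately show "\<exists>y\<in>Y. y j = a j \<and> h y k < Mx k"
      using y Y_upd[OF y(1) j, of "a j"] ab j by (intro bexI[of _ "y(j := a j)"]) auto
  next
    assume "\<exists>y\<in>Y. y j = a j \<and> h y k < Mx k"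
    then obtain y where y: "y \<in> Y" "y j = a j" "h y k < Mx k" by blast
    have "h (y(j := b j)) k = h (y(j := a j)) k" using ind[OF y(1)] ab j by auto
    moreover have "y(j := a j) = y" using y(2) by auto
    ultimately show "\<exists>y\<in>Y. y j = b j \<and> h y k < Mx k"
      using y Y_upd[OF y(1) j, of "b j"] ab j by (intro bexI[of _ "y(j := b j)"]) auto
  qed
  then show ?thesis using False by (simp add: side_def)
qed

lemma side_uniq:
  assumes "(j,k,s1) \<in> Ext" "(j,k,s2) \<in> Ext" "side j k s1 = side j k s2"
  shows "s1 = s2"
proof (rule ccontr)
  assume ne: "s1 \<noteq> s2"
  show False
  proof (cases s1)
    case Pos
    then have "s2 = Neg" using ne by (cases s2) auto
    then show False using side_pair[of j k] assms Pos by auto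
  next
    case Neg
    then have "s2 = Pos" using ne by (cases s2) auto
    then show False using side_pair[of j k] assms Neg by auto
  qed
qed

end


context L
begin

definition "qq y = (\<lambda>i. if i \<in> Bset then \<xi> i else y i)"

lemma qq_props:
  assumes "y \<in> Y"
  shows "qq y \<in> Y" "h (qq y) = h y" "\<forall>i\<in>Bset. qq y i = \<xi> i" "i \<notin> Bset \<Longrightarrow> qq y i = y i"
proof -
  have "finite Bset" using Bset_sub finite_subset by blast
  from rep_aux[OF this _ assms] show "qq y \<in> Y" "h (qq y) = h y" unfolding qq_def by auto
  show "\<forall>i\<in>Bset. qq y i = \<xi> i" "i \<notin> Bset \<Longrightarrow> qq y i = y i" unfolding qq_def by auto
qed

lemma qq_upd: "j \<notin> Bset \<Longrightarrow> qq (y(j := v)) = (qq y)(j := v)"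
  unfolding qq_def by auto

lemma ab': "j \<in> {1..n} \<Longrightarrow> a' j \<le> b' j"
  using lo_le_hi[of j] by (auto simp: a'_def b'_def)

lemma ab'_all: "\<forall>j\<in>{1..n}. a' j \<le> b' j" using ab' by blast

lemma MaxX: "j \<in> {1..n} \<Longrightarrow> Max (comp XX j) = b' j"
  unfolding XX_def using Max_comp_box[OF ab'_all] by simp

lemma card_Y_B:
  assumes "j \<in> Bset"
  shows "b j \<le> a j + 1"
proof -
  have j: "j \<in> {1..n}" using assms Bset_sub by blast
  have "outdeg H j = 0" using Bset_sink[OF assms] by (simp add: is_sink_def)
  have "\<forall>i\<in>{1..n}. (if outdeg H i = 0 \<and> 0 < indeg H i then card (comp Y i) = 2
      else card (comp Y i) \<le> outdeg H i + 1)"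
    using hdb unfolding degree_bounded_def Let_def hIG .
  then have "if outdeg H j = 0 \<and> 0 < indeg H j then card (comp Y j) = 2
      else card (comp Y j) \<le> outdeg H j + 1" using j by blast
  then have "card (comp Y j) \<le> 2"
    using \<open>outdeg H j = 0\<close> by (auto split: if_splits)
  then show ?thesis using card_comp_box[OF ab j] Ybox by simp
qed

lemma B_bounds:
  assumes "j \<in> Bset"
  shows "a' j \<le> a j \<and> b j \<le> b' j"
proof -
  have j: "j \<in> {1..n}" using assms Bset_sub by blast
  have nsG: "\<not> is_sink G j" using assms by (simp add: Bset_def)
  then obtain k s where "(j,k,s) \<in> G" using outdeg_0_iff[OF finG] by (auto simp: is_sink_def)
  moreover have "(j,k,s) \<notin> H" using sink_noarc[OF Bset_sink[OF assms]] .
  ultimately have e: "(j,k,s) \<in> Ext" by (simp add: Ext_def)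
  have r: "a j \<le> \<xi> j" "\<xi> j \<le> b j" "b j \<le> a j + 1" using xi_range[OF j] card_Y_B[OF assms] by auto
  show ?thesis
  proof (cases "a j < \<xi> j")
    case True
    have "Ds j \<noteq> {}"
    proof (cases "\<exists>k'. (j,k',Neg) \<in> Ext")
      case True
      then obtain k' where "(j,k',Neg) \<in> Ext" by blast
      then have "(k',Neg) \<in> Ds j" using \<open>a j < \<xi> j\<close> assms by (auto simp: Ds_def side_def)
      then show ?thesis by blast
    next
      case False
      then have "s = Pos" using e by (cases s) auto
      then have "(k,s) \<in> Ds j" using \<open>a j < \<xi> j\<close> assms e False by (auto simp: Ds_def side_def)
      then show ?thesis by blast
    qed
    then show ?thesis using r True assms by (auto simp: a'_def b'_def lo_def hi_def)
  next
    case ndn: False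
    show ?thesis
    proof (cases "b j = a j")
      case True
      then show ?thesis using r assms by (auto simp: a'_def b'_def lo_def hi_def)
    next
      case False2: False
      have "Us j \<noteq> {}"
      proof (cases "\<exists>k'. (j,k',Pos) \<in> Ext")
        case True
        then obtain k' where "(j,k',Pos) \<in> Ext" by blast
        then have "(k',Pos) \<in> Us j" using assms ndn by (auto simp: Us_def side_def)
        then show ?thesis by blast
      next
        case F: False
        then have "s = Neg" using e by (cases s) auto
        then have "(k,s) \<in> Us j" using ndn assms e F by (auto simp: Us_def side_def)
        then show ?thesis by blast
      qed
      then show ?thesis using r ndn False2 assms by (auto simp: a'_def b'_def lo_def hi_def)
    qed
  qed
qed

lemma Y_sub_X: "Y \<subseteq> XX"
proof
  fix x assume x: "x \<in> Y"
  show "x \<in> XX" unfolding XX_def box_def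
  proof (intro CollectI allI conjI impI)
    fix i assume i: "i \<in> {1..n}"
    have r: "a i \<le> x i" "x i \<le> b i" using Y_range[OF x i] by auto
    show "a' i \<le> x i"
    proof (cases "i \<in> Bset")
      case True then show ?thesis using B_bounds r by fastforce
    next
      case False then show ?thesis using r by (auto simp: a'_def lo_def)
    qed
    show "x i \<le> b' i"
    proof (cases "i \<in> Bset")
      case True then show ?thesis using B_bounds r by fastforce
    next
      case False then show ?thesis using r by (auto simp: b'_def hi_def)
    qed
  next
    fix i assume "i \<notin> {1..n}" then show "x i = 0" using box_out x Ybox by blast
  qed
qed

lemma FF_range: "k \<in> {1..n} \<Longrightarrow> Mn k \<le> FF x k \<and> FF x k \<le> Mx k"
  using Mn_le_Mx Mn_le_h[OF clamp_Y] by (auto simp: FF_def)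

lemma ff_Y: "ff x \<in> Y"
proof -
  have "a k \<le> FF x k \<and> FF x k \<le> b k" if k: "k \<in> {1..n}" for k
    using FF_range[OF k, of x] MnMx_range[OF k] by linarith
  then have "ff x \<in> box n a b" unfolding box_def by (auto simp: ff_def)
  then show ?thesis using Ybox by simp
qed

lemma act_cong: "x l = y l \<Longrightarrow> active x l k s = active y l k s"
  by (simp add: active_def)

lemma act_new:
  assumes "active (x(j := x j + 1)) l k s" "\<not> active x l k s"
  shows "l = j \<and> side l k s"
  using assms by (auto simp: active_def split: if_splits)

lemma act_old:
  assumes "active x l k s" "\<not> active (x(j := x j + 1)) l k s"
  shows "l = j \<and> \<not> side l k s"
  using assms by (auto simp: active_def split: if_splits)

lemma act_Ext: "active x l k s \<Longrightarrow> (l,k,s) \<in> Ext" by (simp add: active_def)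

lemma clamp_step:
  "clamp (x(j := x j + 1)) = clamp x \<or>
   (j \<in> {1..n} \<and> clamp x j < b j \<and> clamp (x(j := x j + 1)) = (clamp x)(j := clamp x j + 1))"
proof (cases "j \<in> {1..n}")
  case False
  then have "clamp (x(j := x j + 1)) = clamp x" by (auto simp: clamp_def)
  then show ?thesis by blast
next
  case True
  have abj: "a j \<le> b j" using ab True by blast
  show ?thesis
  proof (cases "x j < a j \<or> b j \<le> x j")
    case True
    then have "clamp (x(j := x j + 1)) = clamp x" using abj by (auto simp: clamp_def)
    then show ?thesis by blast
  next
    case False
    then have "clamp x j < b j \<and> clamp (x(j := x j + 1)) = (clamp x)(j := clamp x j + 1)"
      using True abj by (auto simp: clamp_def)
    then show ?thesis using True by blast
  qed
qed

lemma base_change: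
  assumes "k \<in> {1..n}" "h (clamp (x(j := x j + 1))) k \<noteq> h (clamp x) k"
  shows "(j,k,if h (clamp (x(j := x j + 1))) k > h (clamp x) k then Pos else Neg) \<in> H"
proof -
  from clamp_step[of x j] assms(2) have
    c: "j \<in> {1..n}" "clamp x j < b j" "clamp (x(j := x j + 1)) = (clamp x)(j := clamp x j + 1)"
    by auto
  show ?thesis unfolding H_iff using c assms clamp_Y
    by (intro conjI bexI[of _ "clamp x"]) auto
qed

lemma IG_sub_core:
  assumes j: "j \<in> {1..n}" and k: "k \<in> {1..n}"
    and ch: "if s = Pos then FF (x(j := x j + 1)) k - FF x k > 0 else FF (x(j := x j + 1)) k - FF x k < 0"
  shows "(j,k,s) \<in> G"
proof -
  let ?x' = "x(j := x j + 1)"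
  have r1: "Mn k \<le> FF x k \<and> FF x k \<le> Mx k" "Mn k \<le> FF ?x' k \<and> FF ?x' k \<le> Mx k"
    using FF_range k by auto
  have rb: "Mn k \<le> h (clamp x) k" "h (clamp x) k \<le> Mx k"
    "Mn k \<le> h (clamp ?x') k" "h (clamp ?x') k \<le> Mx k"
    using Mn_le_h[OF clamp_Y k] by auto
  show ?thesis
  proof (cases s)
    case Pos
    then have gt: "FF ?x' k > FF x k" using ch by simp
    show ?thesis
    proof (cases "hasm x k")
      case True
      then have "FF x k = Mn k" by (simp add: FF_def)
      then have nm: "\<not> hasm ?x' k" using gt by (auto simp: FF_def)
      from True obtain l s' where a: "active x l k s'" "\<not> isM l k s'" by (auto simp: hasm_def)
      then have "\<not> active ?x' l k s'" using nm by (auto simp: hasm_def)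
      from act_old[OF a(1) this] a have "l = j" "s' = Pos" "(l,k,s') \<in> Ext"
        using act_Ext by (auto simp: isM_def)
      then show ?thesis using Pos Ext_G by auto
    next
      case nm: False
      show ?thesis
      proof (cases "hasM x k")
        case True
        then have "FF x k = Mx k" using nm by (simp add: FF_def)
        then show ?thesis using gt r1 by simp
      next
        case nM: False
        then have fx: "FF x k = h (clamp x) k" using nm by (simp add: FF_def)
        show ?thesis
        proof (cases "hasm ?x' k")
          case True
          then have "FF ?x' k = Mn k" by (simp add: FF_def)
          then show ?thesis using gt fx rb by simp
        next
          case nm': False
          show ?thesis
          proof (cases "hasM ?x' k")
            case True
            from True obtain l s' where a: "active ?x' l k s'" "isM l k s'" by (auto simp: hasM_def)
            then have "\<not> active x l k s'" using nM by (auto simp: hasM_def)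
            from act_new[OF a(1) this] a have "l = j" "s' = Pos" "(l,k,s') \<in> Ext"
              using act_Ext by (auto simp: isM_def)
            then show ?thesis using Pos Ext_G by auto
          next
            case False
            then have "FF ?x' k = h (clamp ?x') k" using nm' by (simp add: FF_def)
            then have "h (clamp ?x') k > h (clamp x) k" using gt fx by simp
            then show ?thesis using base_change[OF k, of x j] Pos HG by auto
          qed
        qed
      qed
    qed
  next
    case Neg
    then have lt: "FF ?x' k < FF x k" using ch by simp
    show ?thesis
    proof (cases "hasm ?x' k")
      case True
      then have f': "FF ?x' k = Mn k" by (simp add: FF_def)
      then have nm: "\<not> hasm x k" using lt by (auto simp: FF_def)
      from True obtain l s' where a: "active ?x' l k s'" "\<not> isM l k s'" by (auto simp: hasm_def)
      then have "\<not> active x l k s'" using nm by (auto simp: hasm_def)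
      from act_new[OF a(1) this] a have "l = j" "s' = Neg" "(l,k,s') \<in> Ext"
        using act_Ext by (cases s'; auto simp: isM_def)+
      then show ?thesis using Neg Ext_G by auto
    next
      case nm': False
      show ?thesis
      proof (cases "hasM ?x' k")
        case True
        then have "FF ?x' k = Mx k" using nm' by (simp add: FF_def)
        then show ?thesis using lt r1 by simp
      next
        case nM': False
        then have fx': "FF ?x' k = h (clamp ?x') k" using nm' by (simp add: FF_def)
        show ?thesis
        proof (cases "hasm x k")
          case True
          then have "FF x k = Mn k" by (simp add: FF_def)
          then show ?thesis using lt fx' rb by simp
        next
          case nm: False
          show ?thesis
          proof (cases "hasM x k")
            case True
            from True obtain l s' where a: "active x l k s'" "isM l k s'" by (auto simp: hasM_def)
            then have "\<not> active ?x' l k s'" using nM' by (auto simp: hasM_def)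
            from act_old[OF a(1) this] a have "l = j" "s' = Neg" "(l,k,s') \<in> Ext"
              using act_Ext by (cases s'; auto simp: isM_def)+
            then show ?thesis using Neg Ext_G by auto
          next
            case False
            then have "FF x k = h (clamp x) k" using nm by (simp add: FF_def)
            then have "h (clamp ?x') k < h (clamp x) k" using lt fx' by simp
            then show ?thesis using base_change[OF k, of x j] Neg HG by auto
          qed
        qed
      qed
    qed
  qed
qed

lemma ff_k: "k \<in> {1..n} \<Longrightarrow> ff x k = FF x k" by (simp add: ff_def)

lemma IG_sub: "interaction_graph n XX ff \<subseteq> G"
proof
  fix e assume "e \<in> interaction_graph n XX ff"
  then obtain j k s x where e: "e = (j,k,s)" "j \<in> {1..n}" "k \<in> {1..n}"
    "if s = Pos then ff (x(j := x j + 1)) k - ff x k > 0 else ff (x(j := x j + 1)) k - ff x k < 0"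
    unfolding interaction_graph_def by blast
  then have "if s = Pos then FF (x(j := x j + 1)) k - FF x k > 0 else FF (x(j := x j + 1)) k - FF x k < 0"
    by (simp only: ff_k)
  then show "e \<in> G" using IG_sub_core e by blast
qed

end


context L
begin

lemma IG_intro:
  assumes "j \<in> {1..n}" "k \<in> {1..n}" "x \<in> XX" "x j < b' j"
    "if s = Pos then FF (x(j := x j + 1)) k - FF x k > 0 else FF (x(j := x j + 1)) k - FF x k < 0"
  shows "(j,k,s) \<in> interaction_graph n XX ff"
  unfolding interaction_graph_def using assms MaxX[OF assms(1)] ff_k[OF assms(2)] by auto

lemma qq_core:
  assumes "y \<in> Y" "j \<notin> Bset \<longrightarrow> y j = v" "j \<in> Bset \<longrightarrow> v = \<xi> j"
  shows "qq y \<in> Y" "h (qq y) = h y" "\<forall>i\<in>Bset. qq y i = \<xi> i" "qq y j = v"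
  using qq_props[OF assms(1)] assms by (cases "j \<in> Bset"; auto)+

lemma FF_core: "p \<in> Y \<Longrightarrow> \<forall>i\<in>Bset. p i = \<xi> i \<Longrightarrow> k \<in> {1..n} \<Longrightarrow> FF p k = h p k"
  using core_ff ff_k by metis

lemma real_Up:
  assumes e: "(j,k,s) \<in> Ext" and sd: "side j k s" and y: "y \<in> Y"
    and yj: "j \<notin> Bset \<longrightarrow> y j = hi j"
    and cond: "if s = Pos then h y k < Mx k else Mn k < h y k"
  shows "(j,k,s) \<in> interaction_graph n XX ff"
proof -
  have j: "j \<in> {1..n}" and k: "k \<in> {1..n}" using e Ext_range by auto
  have hiB: "j \<in> Bset \<longrightarrow> hi j = \<xi> j" by (simp add: hi_def)
  define p where "p = qq y"
  have p: "p \<in> Y" "h p = h y" "\<forall>i\<in>Bset. p i = \<xi> i" "p j = hi j"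
    unfolding p_def using qq_core[OF y yj] hiB by auto
  have pX: "p \<in> XX" using p Y_sub_X by blast
  have "(k,s) \<in> Us j" using e sd by (simp add: Us_def)
  then have b'j: "b' j = hi j + 1" by (auto simp: b'_def)
  have Fp: "FF p k = h y k" using FF_core[OF p(1) p(3) k] p(2) by simp
  define x' where "x' = p(j := p j + 1)"
  have act: "active x' l k s' \<longleftrightarrow> l = j \<and> s' = s" for l s'
  proof (cases "l = j")
    case False
    then have "active x' l k s' = active p l k s'" by (intro act_cong) (simp add: x'_def)
    then show ?thesis using core_inactive[OF p(1) p(3)] False by simp
  next
    case True
    have "active x' j k s' \<longleftrightarrow> (j,k,s') \<in> Ext \<and> side j k s'"
      using lo_le_hi[OF j] p(4) by (auto simp: active_def x'_def)
    also have "\<dots> \<longleftrightarrow> s' = s" using side_uniq[OF _ e] e sd by blast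
    finally show ?thesis using True by simp
  qed
  have isM: "isM j k s \<longleftrightarrow> s = Pos" using sd by (simp add: isM_def)
  have Fx': "FF x' k = (if s = Pos then Mx k else Mn k)"
    using act isM by (auto simp: FF_def hasm_def hasM_def)
  show ?thesis
    by (rule IG_intro[OF j k pX]) (use b'j p(4) Fx' Fp cond x'_def in \<open>auto split: if_splits\<close>)
qed

lemma real_Dn:
  assumes e: "(j,k,s) \<in> Ext" and sd: "\<not> side j k s" and y: "y \<in> Y"
    and yj: "j \<notin> Bset \<longrightarrow> y j = lo j"
    and cond: "if s = Pos then Mn k < h y k else h y k < Mx k"
  shows "(j,k,s) \<in> interaction_graph n XX ff"
proof -
  have j: "j \<in> {1..n}" and k: "k \<in> {1..n}" using e Ext_range by auto
  have loB: "j \<in> Bset \<longrightarrow> lo j = \<xi> j" by (simp add: lo_def)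
  define p where "p = qq y"
  have p: "p \<in> Y" "h p = h y" "\<forall>i\<in>Bset. p i = \<xi> i" "p j = lo j"
    unfolding p_def using qq_core[OF y yj] loB by auto
  have pX: "p \<in> XX" using p Y_sub_X by blast
  have "(k,s) \<in> Ds j" using e sd by (simp add: Ds_def)
  then have a'j: "a' j = lo j - 1" by (auto simp: a'_def)
  have Fp: "FF p k = h y k" using FF_core[OF p(1) p(3) k] p(2) by simp
  define x where "x = p(j := lo j - 1)"
  have xX: "x \<in> XX" unfolding x_def XX_def
    using pX a'j ab'[OF j] lo_le_hi[OF j] j
    by (intro upd_box) (auto simp: XX_def b'_def)
  have xj: "x j < b' j" using lo_le_hi[OF j] by (auto simp: x_def b'_def)
  have x'p: "x(j := x j + 1) = p" using p(4) by (auto simp: x_def)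
  have act: "active x l k s' \<longleftrightarrow> l = j \<and> s' = s" for l s'
  proof (cases "l = j")
    case False
    then have "active x l k s' = active p l k s'" by (intro act_cong) (simp add: x_def)
    then show ?thesis using core_inactive[OF p(1) p(3)] False by simp
  next
    case True
    have "active x j k s' \<longleftrightarrow> (j,k,s') \<in> Ext \<and> \<not> side j k s'"
      using lo_le_hi[OF j] by (auto simp: active_def x_def)
    also have "\<dots> \<longleftrightarrow> s' = s" using side_uniq[OF _ e] e sd by blast
    finally show ?thesis using True by simp
  qed
  have isM: "isM j k s \<longleftrightarrow> s = Neg" using sd by (cases s) (simp_all add: isM_def)
  have Fx: "FF x k = (if s = Pos then Mn k else Mx k)"
    using act isM by (cases s) (auto simp: FF_def hasm_def hasM_def)
  show ?thesis
    by (rule IG_intro[OF j k xX xj]) (use x'p Fx Fp cond in \<open>auto split: if_splits\<close>)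
qed

lemma IG_sup: "G \<subseteq> interaction_graph n XX ff"
proof
  fix e assume eG: "e \<in> G"
  obtain j k s where e: "e = (j,k,s)" by (cases e) auto
  have j: "j \<in> {1..n}" and k: "k \<in> {1..n}" using eG e G_range by auto
  show "e \<in> interaction_graph n XX ff"
  proof (cases "(j,k,s) \<in> H")
    case True
    then obtain y where y: "y \<in> Y" "y j < b j"
      "if s = Pos then h (y(j := y j + 1)) k - h y k > 0 else h (y(j := y j + 1)) k - h y k < 0"
      using H_iff by blast
    have jB: "j \<notin> Bset" using True sink_noarc Bset_sink by blast
    have y': "y(j := y j + 1) \<in> Y" using Y_upd[OF y(1) j] Y_range[OF y(1) j] y(2) by auto
    have q: "qq y \<in> Y" "h (qq y) = h y" "\<forall>i\<in>Bset. qq y i = \<xi> i" "qq y j = y j"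
      using qq_props[OF y(1)] jB by auto
    have q': "qq (y(j := y j + 1)) = (qq y)(j := qq y j + 1)" using qq_upd[OF jB] q(4) by simp
    have q'p: "h (qq (y(j := y j + 1))) = h (y(j := y j + 1))"
      "\<forall>i\<in>Bset. qq (y(j := y j + 1)) i = \<xi> i" "qq (y(j := y j + 1)) \<in> Y"
      using qq_props[OF y'] by auto
    have F1: "FF (qq y) k = h y k" using FF_core[OF q(1) q(3) k] q(2) by simp
    have F2': "FF (qq (y(j := y j + 1))) k = h (qq (y(j := y j + 1))) k"
      by (rule FF_core[OF q'p(3) q'p(2) k])
    have F2: "FF ((qq y)(j := qq y j + 1)) k = h (y(j := y j + 1)) k"
      using F2' q'p(1) q' by metis
    have lt: "qq y j < b' j" using q(4) y(2) jB by (simp add: b'_def hi_def)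
    have qX: "qq y \<in> XX" using Y_sub_X q(1) by blast
    show ?thesis unfolding e
      by (rule IG_intro[OF j k qX lt]) (use F1 F2 y(3) in auto)
  next
    case False
    then have ex: "(j,k,s) \<in> Ext" using eG e by (simp add: Ext_def)
    have MnMx: "Mn k < Mx k" using Mn_lt_Mx[OF ex] .
    show ?thesis
    proof (cases "j \<in> Bset")
      case True
      have "\<not> is_source H k" using c1 eG e Bset_sink[OF True] by auto
      then have kA: "k \<notin> Aset" by (simp add: Aset_def)
      obtain y1 where y1: "y1 \<in> Y" "h y1 k = Mn k" using MnMx_R[OF k kA] by (auto simp: R_def)
      obtain y2 where y2: "y2 \<in> Y" "h y2 k = Mx k" using MnMx_R[OF k kA] by (auto simp: R_def)
      show ?thesis unfolding e
      proof (cases "side j k s")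
        case True
        show "(j,k,s) \<in> interaction_graph n XX ff"
        proof (cases s)
          case Pos then show ?thesis using real_Up[OF ex True y1(1)] y1 MnMx \<open>j \<in> Bset\<close> by simp
        next
          case Neg then show ?thesis using real_Up[OF ex True y2(1)] y2 MnMx \<open>j \<in> Bset\<close> by simp
        qed
      next
        case False
        show "(j,k,s) \<in> interaction_graph n XX ff"
        proof (cases s)
          case Pos then show ?thesis using real_Dn[OF ex False y2(1)] y2 MnMx \<open>j \<in> Bset\<close> by simp
        next
          case Neg then show ?thesis using real_Dn[OF ex False y1(1)] y1 MnMx \<open>j \<in> Bset\<close> by simp
        qed
      qed
    next
      case jB: False
      have hilo: "hi j = b j" "lo j = a j" using jB by (auto simp: hi_def lo_def)
      have abj: "a j \<le> b j" using ab j by blast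
      have xa: "\<xi>(j := a j) \<in> Y" and xb: "\<xi>(j := b j) \<in> Y" using Y_upd[OF xi j] abj by auto
      show ?thesis unfolding e
      proof (cases "side j k s")
        case sd: True
        show "(j,k,s) \<in> interaction_graph n XX ff"
        proof (cases s)
          case Pos
          then obtain y where "y \<in> Y" "y j = b j" "h y k < Mx k" using sd jB by (auto simp: side_def)
          then show ?thesis using real_Up[OF ex sd] hilo Pos by auto
        next
          case Neg
          then have nex: "\<not> (\<exists>y\<in>Y. y j = a j \<and> h y k < Mx k)" using sd jB by (auto simp: side_def)
          have "\<exists>y\<in>Y. y j = b j \<and> Mn k < h y k"
          proof (rule ccontr)
            assume "\<not> ?thesis"
            then have "h (\<xi>(j := b j)) k \<le> Mn k" using xb by force
            moreover have "Mx k \<le> h (\<xi>(j := a j)) k" using nex xa by force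
            moreover have "h (\<xi>(j := a j)) k \<le> h (\<xi>(j := b j)) k"
              using noNeg_mono[OF Ext_H[OF ex[unfolded Neg]] j k xi] abj by simp
            ultimately show False using MnMx by simp
          qed
          then obtain y where "y \<in> Y" "y j = b j" "Mn k < h y k" by blast
          then show ?thesis using real_Up[OF ex sd] hilo Neg by auto
        qed
      next
        case sd: False
        show "(j,k,s) \<in> interaction_graph n XX ff"
        proof (cases s)
          case Neg
          then obtain y where "y \<in> Y" "y j = a j" "h y k < Mx k" using sd jB by (auto simp: side_def)
          then show ?thesis using real_Dn[OF ex sd] hilo Neg by auto
        next
          case Pos
          then have nex: "\<not> (\<exists>y\<in>Y. y j = b j \<and> h y k < Mx k)" using sd jB by (auto simp: side_def)
          have "\<exists>y\<in>Y. y j = a j \<and> Mn k < h y k"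
          proof (rule ccontr)
            assume "\<not> ?thesis"
            then have "h (\<xi>(j := a j)) k \<le> Mn k" using xa by force
            moreover have "Mx k \<le> h (\<xi>(j := b j)) k" using nex xb by force
            moreover have "h (\<xi>(j := b j)) k \<le> h (\<xi>(j := a j)) k"
              using noPos_mono[OF Ext_H[OF ex[unfolded Pos]] j k xi] abj by simp
            ultimately show False using MnMx by simp
          qed
          then obtain y where "y \<in> Y" "y j = a j" "Mn k < h y k" by blast
          then show ?thesis using real_Dn[OF ex sd] hilo Pos by auto
        qed
      qed
    qed
  qed
qed

lemma IG_eq: "interaction_graph n XX ff = G"
  using IG_sub IG_sup by blast

end


context L
begin

lemma outG_split:
  "{(k,s). (i,k,s) \<in> G} = {(k,s). (i,k,s) \<in> H} \<union> Us i \<union> Ds i"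
  using HG by (auto simp: Us_def Ds_def Ext_def)

lemma outdeg_split: "outdeg G i = outdeg H i + card (Us i) + card (Ds i)"
proof -
  have fH: "finite {(k,s). (i,k,s) \<in> H}" using finite_out[OF finH] .
  have fG: "finite {(k,s). (i,k,s) \<in> G}" using finite_out[OF finG] .
  have fU: "finite (Us i)" and fD: "finite (Ds i)" using fG outG_split
    by (metis finite_Un)+
  have "card ({(k,s). (i,k,s) \<in> H} \<union> Us i \<union> Ds i)
      = card ({(k,s). (i,k,s) \<in> H} \<union> Us i) + card (Ds i)"
    by (rule card_Un_disjoint) (use fH fU fD in \<open>auto simp: Us_def Ds_def Ext_def\<close>)
  also have "card ({(k,s). (i,k,s) \<in> H} \<union> Us i) = card {(k,s). (i,k,s) \<in> H} + card (Us i)"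
    by (rule card_Un_disjoint) (use fH fU in \<open>auto simp: Us_def Ext_def\<close>)
  finally have eq: "card ({(k,s). (i,k,s) \<in> H} \<union> Us i \<union> Ds i)
      = card {(k,s). (i,k,s) \<in> H} + card (Us i) + card (Ds i)" .
  show ?thesis unfolding outdeg_def by (subst outG_split) (rule eq)
qed

lemma eU_le: "(if Us i = {} then 0 else 1) \<le> card (Us i)"
proof -
  have "finite (Us i)" using finite_out[OF finG] outG_split by (metis finite_Un)
  then show ?thesis by (auto simp: card_gt_0_iff Suc_le_eq)
qed

lemma eD_le: "(if Ds i = {} then 0 else 1) \<le> card (Ds i)"
proof -
  have "finite (Ds i)" using finite_out[OF finG] outG_split by (metis finite_Un)
  then show ?thesis by (auto simp: card_gt_0_iff Suc_le_eq)
qed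

lemma hdb_i: "i \<in> {1..n} \<Longrightarrow> (if outdeg H i = 0 \<and> 0 < indeg H i then card (comp Y i) = 2
      else card (comp Y i) \<le> outdeg H i + 1)"
proof -
  assume i: "i \<in> {1..n}"
  have "\<forall>i\<in>{1..n}. (if outdeg H i = 0 \<and> 0 < indeg H i then card (comp Y i) = 2
      else card (comp Y i) \<le> outdeg H i + 1)"
    using hdb unfolding degree_bounded_def Let_def hIG .
  then show ?thesis using i by blast
qed

lemma deg_X:
  assumes i: "i \<in> {1..n}"
  shows "if outdeg G i = 0 \<and> 0 < indeg G i then card (comp XX i) = 2
      else card (comp XX i) \<le> outdeg G i + 1"
proof -
  have cX: "card (comp XX i) = nat (b' i - a' i + 1)" unfolding XX_def using card_comp_box[OF ab'_all i] .
  have cY: "card (comp Y i) = nat (b i - a i + 1)" using card_comp_box[OF ab i] Ybox by simp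
  have od: "outdeg G i = outdeg H i + card (Us i) + card (Ds i)" by (rule outdeg_split)
  have eU: "(if Us i = {} then 0 else 1) \<le> card (Us i)" by (rule eU_le)
  have eD: "(if Ds i = {} then 0 else 1) \<le> card (Ds i)" by (rule eD_le)
  have abi: "a i \<le> b i" using ab i by blast
  have hd: "if outdeg H i = 0 \<and> 0 < indeg H i then card (comp Y i) = 2
      else card (comp Y i) \<le> outdeg H i + 1" by (rule hdb_i[OF i])
  show ?thesis
  proof (cases "outdeg G i = 0 \<and> 0 < indeg G i")
    case True
    then have UD: "card (Us i) = 0" "card (Ds i) = 0" "outdeg H i = 0" using od by auto
    then have "Us i = {}" "Ds i = {}" using eU eD by (auto split: if_splits)
    have "is_sink G i" using True by (simp add: is_sink_def)
    then have iB: "i \<notin> Bset" by (simp add: Bset_def)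
    have "indeg G i \<noteq> 0" using True by simp
    then obtain j s where "(j,i,s) \<in> G" using indeg_0_iff[OF finG, of i] by auto
    then have "\<not> is_isolated H i" using c2 by blast
    then have "\<not> is_source H i" using UD by (simp add: is_isolated_def is_sink_def)
    then have "0 < indeg H i" by (simp add: is_source_def)
    then have "card (comp Y i) = 2" using hd UD by simp
    then have "card (comp XX i) = 2" using cX cY iB \<open>Us i = {}\<close> \<open>Ds i = {}\<close>
      by (simp add: a'_def b'_def lo_def hi_def)
    then show ?thesis using True by simp
  next
    case nA: False
    show ?thesis
    proof (cases "i \<in> Bset")
      case True
      have "outdeg H i = 0" using Bset_sink[OF True] by (simp add: is_sink_def)
      then have "card (comp XX i) = nat (1 + (if Us i = {} then 0 else 1) + (if Ds i = {} then 0 else 1))"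
        using cX True by (simp add: a'_def b'_def lo_def hi_def algebra_simps)
      then have "card (comp XX i) \<le> 1 + card (Us i) + card (Ds i)" using eU eD
        by (auto split: if_splits)
      then show ?thesis using nA od \<open>outdeg H i = 0\<close> by simp
    next
      case False
      have cX2: "card (comp XX i) = nat (b i - a i + 1) + (if Us i = {} then 0 else 1) + (if Ds i = {} then 0 else 1)"
        using cX False abi by (auto simp: a'_def b'_def lo_def hi_def)
      have "card (comp Y i) \<le> outdeg H i + 1"
      proof (cases "outdeg H i = 0 \<and> 0 < indeg H i")
        case True
        then have "is_sink H i" by (simp add: is_sink_def)
        then have "is_sink G i" using False i by (simp add: Bset_def)
        then have "outdeg G i = 0" by (simp add: is_sink_def)
        moreover have "indeg H i \<noteq> 0" using True by simp
        then obtain j s where "(j,i,s) \<in> H" using indeg_0_iff[OF finH, of i] by auto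
        then have "indeg G i \<noteq> 0" using indeg_0_iff[OF finG] HG by blast
        ultimately show ?thesis using nA by simp
      next
        case False then show ?thesis using hd by (simp only: if_False)
      qed
      then show ?thesis using nA cX2 cY od eU eD by simp
    qed
  qed
qed

lemma db_X: "degree_bounded n XX ff"
  unfolding degree_bounded_def Let_def IG_eq using deg_X by blast

lemma ss_X: "state_space n XX"
  unfolding state_space_def XX_def using ab'_all by blast

lemma ff_R: "i \<in> {1..n} \<Longrightarrow> i \<notin> Aset \<Longrightarrow> ff x i \<in> R i"
  using MnMx_R clamp_Y by (auto simp: ff_def FF_def R_def)

lemma nbr_ff:
  assumes x: "x \<in> Y" and i: "i \<in> {1..n}" and nb: "in_nbrs G i \<inter> Bset = {}"
  shows "ff x i = h x i"
proof -
  have "\<not> active x j i s" for j s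
  proof
    assume act: "active x j i s"
    then have e: "(j,i,s) \<in> Ext" by (simp add: active_def)
    then have "j \<in> in_nbrs G i" using Ext_G by (auto simp: in_nbrs_def)
    then have jB: "j \<notin> Bset" using nb by blast
    have jn: "j \<in> {1..n}" using e Ext_range by blast
    then show False using act jB Y_range[OF x jn] by (auto simp: active_def lo_def hi_def split: if_splits)
  qed
  then show ?thesis using i clamp_id[OF x] by (auto simp: ff_def FF_def hasm_def hasM_def)
qed

end

theorem lemma9:
  fixes n :: nat and G H :: sdigraph
    and Y :: "(nat \<Rightarrow> int) set" and h :: "(nat \<Rightarrow> int) \<Rightarrow> (nat \<Rightarrow> int)"
    and \<xi> :: "nat \<Rightarrow> int"
  assumes "is_sdigraph n G"
    and "H \<subseteq> G"
    and "\<forall>(j, i, s)\<in>G. \<not> (is_sink H j \<and> is_source H i)"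
    and "\<forall>(j, i, s)\<in>G. \<not> is_isolated H i"
    and "A = {i\<in>{1..n}. is_source H i \<and> \<not> is_source G i}"
    and "B = {i\<in>{1..n}. is_sink H i \<and> \<not> is_sink G i}"
    and "fds_on n Y h H"
    and "degree_bounded n Y h"
    and "\<xi> \<in> Y"
  shows "\<exists>X f. fds_on n X f G \<and> degree_bounded n X f \<and> Y \<subseteq> X
     \<and> f ` X \<subseteq> Y
     \<and> (\<forall>i\<in>{1..n} - A. (\<lambda>x. f x i) ` X \<subseteq> (\<lambda>y. h y i) ` Y)
     \<and> (\<forall>x\<in>Y. (\<forall>i\<in>B. x i = \<xi> i) \<longrightarrow> f x = h x)
     \<and> (\<forall>x\<in>Y. \<forall>i\<in>{1..n}. in_nbrs G i \<inter> B = {} \<longrightarrow> f x i = h x i)"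
proof -
  from assms(7) obtain a b where ab: "\<forall>i\<in>{1..n}. a i \<le> b i" "Y = box n a b"
    and hm: "\<forall>x\<in>Y. h x \<in> Y" and hig: "interaction_graph n Y h = H"
    unfolding fds_on_def state_space_def by blast
  interpret I: L n G H Y h \<xi> a b
    using assms(1-4,8,9) ab hm hig by unfold_locales auto
  have AA: "A = I.Aset" using assms(5) by (simp add: I.Aset_def)
  have BB: "B = I.Bset" using assms(6) by (simp add: I.Bset_def)
  show ?thesis
  proof (intro exI conjI)
    show "fds_on n I.XX I.ff G" unfolding fds_on_def
      using I.ss_X I.ff_Y I.Y_sub_X I.IG_eq by blast
    show "degree_bounded n I.XX I.ff" by (rule I.db_X)
    show "Y \<subseteq> I.XX" by (rule I.Y_sub_X)
    show "I.ff ` I.XX \<subseteq> Y" using I.ff_Y by blast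
    show "\<forall>i\<in>{1..n} - A. (\<lambda>x. I.ff x i) ` I.XX \<subseteq> (\<lambda>y. h y i) ` Y"
      using I.ff_R AA by (auto simp: I.R_def)
    show "\<forall>x\<in>Y. (\<forall>i\<in>B. x i = \<xi> i) \<longrightarrow> I.ff x = h x"
      using I.core_ff BB by blast
    show "\<forall>x\<in>Y. \<forall>i\<in>{1..n}. in_nbrs G i \<inter> B = {} \<longrightarrow> I.ff x i = h x i"
      using I.nbr_ff BB by blast
  qed
qed

end
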